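(* There is an absolute constant $c>0$ such that for all integers $n\ge 1$ and $1\le d<n$, the function $\mathrm{HAM}^{(d)}_n$ has a realization with margin at least $c/d$; that is, $\gamma(\mathrm{HAM}^{(d)}_n)=\Omega(1/d)$.
   Context: $\mathrm{HAM}^{(d)}_n:\{0,1\}^n\times\{0,1\}^n\to\{0,1\}$ is defined by $\mathrm{HAM}^{(d)}_n(x,y)=1$ iff the Hamming distance between $x$ and $y$ is at most $d$. An assignment of real unit vectors $\alpha_x,\beta_y$ is a realization of a Boolean function $f$ with margin $\gamma>0$ if $\langle\alpha_x,\beta_y\rangle\ge\gamma$ whenever $f(x,y)=0$ and $\langle\alpha_x,\beta_y\rangle\le-\gamma$ whenever $f(x,y)=1$; $\gamma(f)$ denotes the supremum of margins over all realizations of $f$ in any dimension. *)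

theory Defs
  imports Complex_Main
begin

definition cube :: "nat \<Rightarrow> bool list set" where
  "cube n = {x. length x = n}"

definition hamming_dist :: "bool list \<Rightarrow> bool list \<Rightarrow> nat" where
  "hamming_dist x y = card {i. i < length x \<and> x ! i \<noteq> y ! i}"

definition HAM :: "nat \<Rightarrow> nat \<Rightarrow> bool list \<Rightarrow> bool list \<Rightarrow> bool" where
  "HAM n d x y = (hamming_dist x y \<le> d)"

text \<open>Vectors in R^k represented as functions nat => real, using coordinates 0..k-1.\<close>
definition ip :: "nat \<Rightarrow> (nat \<Rightarrow> real) \<Rightarrow> (nat \<Rightarrow> real) \<Rightarrow> real" where
  "ip k u v = (\<Sum>i<k. u i * v i)"

definition is_realization ::
  "'a set \<Rightarrow> 'b set \<Rightarrow> ('a \<Rightarrow> 'b \<Rightarrow> bool) \<Rightarrow> nat \<Rightarrow>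
   ('a \<Rightarrow> nat \<Rightarrow> real) \<Rightarrow> ('b \<Rightarrow> nat \<Rightarrow> real) \<Rightarrow> real \<Rightarrow> bool" where
  "is_realization X Y f k \<alpha> \<beta> g \<longleftrightarrow>
     g > 0 \<and>
     (\<forall>x\<in>X. ip k (\<alpha> x) (\<alpha> x) = 1) \<and>
     (\<forall>y\<in>Y. ip k (\<beta> y) (\<beta> y) = 1) \<and>
     (\<forall>x\<in>X. \<forall>y\<in>Y. (\<not> f x y \<longrightarrow> ip k (\<alpha> x) (\<beta> y) \<ge> g) \<and>
                     (f x y \<longrightarrow> ip k (\<alpha> x) (\<beta> y) \<le> - g))"

end

theory Submission
  imports Defs
begin

definition uu :: "real \<Rightarrow> bool \<Rightarrow> nat \<Rightarrow> real" where
  "uu r a i = (if i = 0 then sqrt ((1+r)/2) else if a then sqrt ((1-r)/2) else - sqrt ((1-r)/2))"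

fun vec :: "real \<Rightarrow> bool list \<Rightarrow> nat \<Rightarrow> real" where
  "vec r [] j = (if j = 0 then 1 else 0)"
| "vec r (a#x) j = (if j < 2^length x then uu r a 0 * vec r x j
                    else uu r a 1 * vec r x (j - 2^length x))"

lemma uu_prod: assumes "-1 \<le> r" "r \<le> 1"
  shows "uu r a 0 * uu r b 0 + uu r a 1 * uu r b 1 = (if a = b then 1 else r)"
proof -
  have "sqrt ((1+r)/2) * sqrt ((1+r)/2) = (1+r)/2" using assms by (simp add: real_sqrt_mult_self)
  moreover have "sqrt ((1-r)/2) * sqrt ((1-r)/2) = (1-r)/2" using assms by (simp add: real_sqrt_mult_self)
  ultimately show ?thesis unfolding uu_def by (auto simp: field_simps)
qed

lemma ham_cons: assumes "length x = length y"
  shows "hamming_dist (a#x) (b#y) = (if a = b then 0 else 1) + hamming_dist x y"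
proof -
  have e: "{i. i < length (a#x) \<and> (a#x)!i \<noteq> (b#y)!i} =
     (if a = b then {} else {0}) \<union> Suc ` {i. i < length x \<and> x!i \<noteq> y!i}"
  proof (rule set_eqI)
    fix i show "i \<in> {i. i < length (a#x) \<and> (a#x)!i \<noteq> (b#y)!i} \<longleftrightarrow>
      i \<in> (if a = b then {} else {0}) \<union> Suc ` {i. i < length x \<and> x!i \<noteq> y!i}"
      by (cases i) auto
  qed
  have f: "finite {i. i < length x \<and> x!i \<noteq> y!i}" by simp
  have "card (Suc ` {i. i < length x \<and> x!i \<noteq> y!i}) = card {i. i < length x \<and> x!i \<noteq> y!i}"
    by (simp add: card_image)
  then show ?thesis unfolding hamming_dist_def e using f by auto
qed

lemma vec_lo: "j < 2^length x \<Longrightarrow> vec r (a#x) j = uu r a 0 * vec r x j" by simp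
lemma vec_hi: "vec r (a#x) (j + 2^length x) = uu r a 1 * vec r x j" by simp

declare vec.simps(2)[simp del]

lemma ip_vec: assumes "-1 \<le> r" "r \<le> 1"
  shows "length x = length y \<Longrightarrow> ip (2^length x) (vec r x) (vec r y) = r ^ hamming_dist x y"
proof (induction x arbitrary: y)
  case Nil
  then show ?case by (simp add: ip_def hamming_dist_def)
next
  case (Cons a x)
  then obtain b y' where y: "y = b # y'" and l: "length x = length y'" by (cases y) auto
  define K :: nat where "K = 2 ^ length x"
  have IH: "(\<Sum>j<K. vec r x j * vec r y' j) = r ^ hamming_dist x y'"
    using Cons.IH[OF l] by (simp add: ip_def K_def)
  have "ip (2^length (a#x)) (vec r (a#x)) (vec r y) = (\<Sum>j\<in>{0..<K+K}. vec r (a#x) j * vec r (b#y') j)"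
    by (simp add: ip_def K_def y lessThan_atLeast0 mult_2 del: vec.simps)
  also have "\<dots> = (\<Sum>j\<in>{0..<K}. vec r (a#x) j * vec r (b#y') j) + (\<Sum>j\<in>{K..<K+K}. vec r (a#x) j * vec r (b#y') j)"
    by (rule sum.atLeastLessThan_concat[symmetric]) auto
  also have "(\<Sum>j\<in>{K..<K+K}. vec r (a#x) j * vec r (b#y') j) = (\<Sum>j\<in>{0..<K}. vec r (a#x) (j+K) * vec r (b#y') (j+K))"
    using sum.shift_bounds_nat_ivl[of _ 0 K K] by (simp del: vec.simps)
  also have "\<dots> = (\<Sum>j\<in>{0..<K}. (uu r a 1 * uu r b 1) * (vec r x j * vec r y' j))"
    unfolding K_def l[symmetric] vec_hi by (simp add: mult_ac vec_hi[of r b y', unfolded l[symmetric]] del: vec.simps)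
  also have "(\<Sum>j\<in>{0..<K}. vec r (a#x) j * vec r (b#y') j) = (\<Sum>j\<in>{0..<K}. (uu r a 0 * uu r b 0) * (vec r x j * vec r y' j))"
    unfolding K_def l[symmetric] by (intro sum.cong refl) (simp add: vec_lo vec_lo[of _ y', unfolded l[symmetric]] mult_ac del: vec.simps)
  finally have X: "ip (2^length (a#x)) (vec r (a#x)) (vec r y) = (\<Sum>j\<in>{0..<K}. (uu r a 0 * uu r b 0) * (vec r x j * vec r y' j)) + (\<Sum>j\<in>{0..<K}. (uu r a 1 * uu r b 1) * (vec r x j * vec r y' j))" .
  have S: "(\<Sum>j\<in>{0..<K}. vec r x j * vec r y' j) = r ^ hamming_dist x y'" using IH by (simp add: lessThan_atLeast0)
  have "ip (2^length (a#x)) (vec r (a#x)) (vec r y) = (uu r a 0 * uu r b 0 + uu r a 1 * uu r b 1) * r ^ hamming_dist x y'"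
    unfolding X sum_distrib_left[symmetric] S distrib_right ..
  then show ?case using uu_prod[OF assms] by (simp add: y ham_cons[OF l])
qed


lemma ip_ext: "ip (Suc N) (\<lambda>j. s * (if j < N then f j else a)) (\<lambda>j. s * (if j < N then g j else b))
   = s * s * (ip N f g + a * b)"
proof -
  have "(\<Sum>j<N. s * (if j < N then f j else a) * (s * (if j < N then g j else b))) = (\<Sum>j<N. s * s * (f j * g j))"
    by (intro sum.cong) auto
  then show ?thesis unfolding ip_def by (simp add: sum_distrib_left[symmetric] algebra_simps)
qed

lemma ip_neg: "ip N f (\<lambda>j. - g j) = - ip N f g" "ip N (\<lambda>j. - f j) (\<lambda>j. - g j) = ip N f g"
  unfolding ip_def by (simp_all add: sum_negf)

theorem mainTheorem7:
  shows "\<exists>c::real. c > 0 \<and>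
    (\<forall>n d::nat. 1 \<le> n \<longrightarrow> 1 \<le> d \<longrightarrow> d < n \<longrightarrow>
       (\<exists>k \<alpha> \<beta>. is_realization (cube n) (cube n) (HAM n d) k \<alpha> \<beta> (c / real d)))"
proof (intro exI[of _ "1/16"] conjI allI impI)
  fix n d :: nat
  assume "1 \<le> n" and d1: "1 \<le> d" and "d < n"
  define r :: real where "r = 1 - 1 / (2 * d)"
  define th :: real where "th = r ^ d * (1 + r) / 2"
  define s :: real where "s = 1 / sqrt (1 + th)"
  define N :: nat where "N = 2 ^ n"
  define al where "al = (\<lambda>x j. s * (if j < N then vec r x j else sqrt th))"
  define be where "be = (\<lambda>x j. s * (if j < N then - vec r x j else sqrt th))"
  have dpos: "real d \<ge> 1" using d1 by simp
  have r0: "0 \<le> r" and r1: "r \<le> 1" using dpos by (auto simp: r_def field_simps)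
  have rm1: "-1 \<le> r" using r0 by simp
  have bern: "r ^ d \<ge> 1/2"
  proof -
    have "1 + real d * (- 1 / (2 * d)) \<le> (1 + (- 1 / (2 * d))) ^ d"
      by (rule Bernoulli_inequality) (use dpos in \<open>auto simp: field_simps\<close>)
    then show ?thesis using dpos by (simp add: r_def)
  qed
  have rd1: "r ^ d \<le> 1" using r0 r1 by (simp add: power_le_one)
  have th0: "0 \<le> th" using r0 by (simp add: th_def)
  have th1: "th \<le> 1"
  proof -
    have "th = r ^ d * ((1 + r) / 2)" by (simp add: th_def)
    also have "\<dots> \<le> 1" using rd1 r1 r0 by (intro mult_le_one) auto
    finally show ?thesis .
  qed
  have ss: "s * s = 1 / (1 + th)" using th0 by (simp add: s_def real_sqrt_mult_self)
  have sq: "sqrt th * sqrt th = th" using th0 by (simp add: real_sqrt_mult_self)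
  have IP: "x \<in> cube n \<Longrightarrow> y \<in> cube n \<Longrightarrow> ip N (vec r x) (vec r y) = r ^ hamming_dist x y" for x y
    using ip_vec[OF rm1 r1, of x y] by (simp add: cube_def N_def)
  have G: "r ^ d * (1 - r) / 2 \<ge> 1 / (8 * d)"
  proof -
    have "(1 - r) / 2 = 1 / (4 * d)" by (simp add: r_def)
    moreover have "r ^ d * (1 / (4 * d)) \<ge> (1/2) * (1 / (4 * d))"
      using bern by (intro mult_right_mono) auto
    ultimately show ?thesis by simp
  qed
  have key: "(th - r ^ h) / (1 + th) \<le> - (1/16 / real d)" if "h \<le> d" for h
  proof -
    have "r ^ d \<le> r ^ h" using that r0 r1 by (rule power_decreasing)
    then have "th - r ^ h \<le> - (r ^ d * (1 - r) / 2)" by (simp add: th_def field_simps)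
    then have "th - r ^ h \<le> - (1 / (8 * d))" using G by simp
    then have "(th - r ^ h) / (1 + th) \<le> - (1 / (8 * d)) / (1 + th)" using th0
      by (intro divide_right_mono) auto
    moreover have "(1 / (8 * d)) / (1 + th) \<ge> (1 / (8 * d)) / 2" using th0 th1 dpos
      by (intro divide_left_mono) auto
    ultimately show ?thesis by simp
  qed
  have key2: "(th - r ^ h) / (1 + th) \<ge> 1/16 / real d" if "\<not> h \<le> d" for h
  proof -
    have "r ^ h \<le> r ^ Suc d" using that r0 r1 by (intro power_decreasing) auto
    then have "th - r ^ h \<ge> r ^ d * (1 - r) / 2" by (simp add: th_def field_simps)
    then have "th - r ^ h \<ge> 1 / (8 * d)" using G by simp
    then have "(th - r ^ h) / (1 + th) \<ge> (1 / (8 * d)) / (1 + th)" using th0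
      by (intro divide_right_mono) auto
    moreover have "(1 / (8 * d)) / (1 + th) \<ge> (1 / (8 * d)) / 2" using th0 th1 dpos
      by (intro divide_left_mono) auto
    ultimately show ?thesis by simp
  qed
  show "\<exists>k \<alpha> \<beta>. is_realization (cube n) (cube n) (HAM n d) k \<alpha> \<beta> (1/16 / real d)"
  proof (rule exI[of _ "Suc N"], rule exI[of _ al], rule exI[of _ be])
    have A: "ip (Suc N) (al x) (be y) = (th - r ^ hamming_dist x y) / (1 + th)"
      if "x \<in> cube n" "y \<in> cube n" for x y
      unfolding al_def be_def ip_ext ip_neg(1) IP[OF that] ss sq by simp
    have B: "ip (Suc N) (al x) (al x) = 1" if "x \<in> cube n" for x
      unfolding al_def ip_ext IP[OF that that] ss sq using th0 by (simp add: hamming_dist_def)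
    have C: "ip (Suc N) (be x) (be x) = 1" if "x \<in> cube n" for x
      unfolding be_def ip_ext ip_neg(2) IP[OF that that] ss sq using th0 by (simp add: hamming_dist_def)
    show "is_realization (cube n) (cube n) (HAM n d) (Suc N) al be (1/16 / real d)"
      unfolding is_realization_def HAM_def
    proof (intro conjI ballI impI)
      show "0 < 1 / 16 / real d" using dpos by simp
    next
      fix x assume "x \<in> cube n" then show "ip (Suc N) (al x) (al x) = 1" by (rule B)
    next
      fix x assume "x \<in> cube n" then show "ip (Suc N) (be x) (be x) = 1" by (rule C)
    next
      fix x y assume xy: "x \<in> cube n" "y \<in> cube n" "\<not> hamming_dist x y \<le> d"
      show "1 / 16 / real d \<le> ip (Suc N) (al x) (be y)" unfolding A[OF xy(1,2)] by (rule key2[OF xy(3)])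
    next
      fix x y assume xy: "x \<in> cube n" "y \<in> cube n" "hamming_dist x y \<le> d"
      show "ip (Suc N) (al x) (be y) \<le> - (1 / 16 / real d)" unfolding A[OF xy(1,2)] by (rule key[OF xy(3)])
    qed
  qed
qed simp
end
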